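(* Let $n\ge4$ be even, $1\le i\le n-1$, $y\in Y_i$ and $s\in\{s_1,\dots,s_{n-1}\}$ with $sys\notin Y_i$. (a) If $i=1$ then $s=s_2$. (b) If $2\le i\le n-2$ then $s\in\{s_1,s_i,s_{i+1}\}$. (c) If $i=n-1$ then $s\in\{s_1,s_{n-1}\}$.
   Context: $s_i=(i,i+1)$; permutations compose right to left. $\mathcal F_m$ is the set of fixed-point-free involutions in $S_m$. Regard $\mathcal F_{n-2}\subset S_n$; $w_0$ longest element of $S_n$; $Y_1=\{w_0zs_{n-1}w_0:z\in\mathcal F_{n-2}\}$; $\sigma_i=s_is_{i-1}\cdots s_1$; $Y_i=\sigma_iY_1\sigma_i^{-1}$. *)

theory Defs
  imports "HOL-Combinatorics.Combinatorics"
begin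

text \<open>Permutations of {1..n} are functions nat => nat that permute {1..n}
  (identity elsewhere); composition is function composition (right to left).\<close>

definition sgen :: "nat \<Rightarrow> nat \<Rightarrow> nat" where
  "sgen i = transpose i (i + 1)"

definition longest :: "nat \<Rightarrow> nat \<Rightarrow> nat" where
  "longest n = (\<lambda>x. if x \<in> {1..n} then n + 1 - x else x)"

definition fpf_invols :: "nat \<Rightarrow> (nat \<Rightarrow> nat) set" where
  "fpf_invols m = {z. z permutes {1..m} \<and> z \<circ> z = id \<and> (\<forall>x\<in>{1..m}. z x \<noteq> x)}"

definition Y1 :: "nat \<Rightarrow> (nat \<Rightarrow> nat) set" where
  "Y1 n = {longest n \<circ> z \<circ> sgen (n - 1) \<circ> longest n | z. z \<in> fpf_invols (n - 2)}"

fun sigma :: "nat \<Rightarrow> nat \<Rightarrow> nat" where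
  "sigma 0 = id"
| "sigma (Suc i) = sgen (Suc i) \<circ> sigma i"

definition Yset :: "nat \<Rightarrow> nat \<Rightarrow> (nat \<Rightarrow> nat) set" where
  "Yset n i = {sigma i \<circ> y \<circ> inv (sigma i) | y. y \<in> Y1 n}"

end

theory Submission
  imports Defs
begin

definition FI :: "nat \<Rightarrow> (nat \<Rightarrow> nat) \<Rightarrow> bool" where
  "FI n w \<longleftrightarrow> w permutes {1..n} \<and> w \<circ> w = id \<and> (\<forall>x\<in>{1..n}. w x \<noteq> x)"

lemma FI_conj:
  assumes p: "p permutes {1..n}" and w: "FI n w"
  shows "FI n (p \<circ> w \<circ> inv p)"
proof -
  have wp: "w permutes {1..n}" and ww: "\<And>x. w (w x) = x" and fp: "\<And>x. x \<in> {1..n} \<Longrightarrow> w x \<noteq> x"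
    using w unfolding FI_def by (auto simp: fun_eq_iff)
  have "p \<circ> w \<circ> inv p permutes {1..n}"
    by (intro permutes_compose permutes_inv p wp)
  moreover have "(p \<circ> w \<circ> inv p) \<circ> (p \<circ> w \<circ> inv p) = id"
    by (auto simp: fun_eq_iff permutes_inverses[OF p] ww)
  moreover have "\<forall>x\<in>{1..n}. (p \<circ> w \<circ> inv p) x \<noteq> x"
  proof
    fix x assume x: "x \<in> {1..n}"
    have "inv p x \<in> {1..n}" using x permutes_in_image[OF permutes_inv[OF p]] by blast
    then have "w (inv p x) \<noteq> inv p x" by (rule fp)
    show "(p \<circ> w \<circ> inv p) x \<noteq> x"
    proof
      assume "(p \<circ> w \<circ> inv p) x = x"
      then have "inv p (p (w (inv p x))) = inv p x" by simp
      then have "w (inv p x) = inv p x" by (simp only: permutes_inverses(2)[OF p])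
      with \<open>w (inv p x) \<noteq> inv p x\<close> show False by simp
    qed
  qed
  ultimately show ?thesis unfolding FI_def by blast
qed

lemma FI_conj_iff:
  assumes p: "p permutes {1..n}"
  shows "FI n (p \<circ> w \<circ> inv p) \<longleftrightarrow> FI n w"
proof
  assume "FI n (p \<circ> w \<circ> inv p)"
  from FI_conj[OF permutes_inv[OF p] this]
  have "FI n (inv p \<circ> (p \<circ> w \<circ> inv p) \<circ> inv (inv p))" .
  moreover have "inv (inv p) = p" using p by (simp add: inv_inv_eq permutes_bij)
  moreover have "inv p \<circ> (p \<circ> w \<circ> inv p) \<circ> p = w"
    by (simp add: fun_eq_iff permutes_inverses[OF p])
  ultimately show "FI n w" by simp
next
  assume "FI n w" then show "FI n (p \<circ> w \<circ> inv p)" by (rule FI_conj[OF p])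
qed

lemma base:
  assumes n: "n \<ge> 2"
  shows "(\<exists>z\<in>fpf_invols (n - 2). v = z \<circ> sgen (n - 1)) \<longleftrightarrow> FI n v \<and> v (n - 1) = n"
proof
  assume "\<exists>z\<in>fpf_invols (n - 2). v = z \<circ> sgen (n - 1)"
  then obtain z where z: "z \<in> fpf_invols (n - 2)" and v: "v = z \<circ> sgen (n - 1)" by blast
  have zp: "z permutes {1..n-2}" and zz: "\<And>x. z (z x) = x" and zf: "\<And>x. x \<in> {1..n-2} \<Longrightarrow> z x \<noteq> x"
    using z unfolding fpf_invols_def by (auto simp: fun_eq_iff)
  have zo: "\<And>x. x \<notin> {1..n-2} \<Longrightarrow> z x = x" using permutes_not_in[OF zp] .
  have "n - Suc 0 \<notin> {1..n-2}" "n \<notin> {1..n-2}" using n by auto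
  then have zn: "z (n - Suc 0) = n - Suc 0" "z n = n" using zo by blast+
  have zi: "\<And>x. x \<in> {1..n-2} \<Longrightarrow> z x \<in> {1..n-2}" using permutes_in_image[OF zp] by blast
  have S: "sgen (n - Suc 0) x = (if x = n - Suc 0 then n else if x = n then n - Suc 0 else x)" for x
    using n by (simp add: sgen_def transpose_def)
  have comm: "z (sgen (n-1) x) = sgen (n-1) (z x)" for x
  proof (cases "x \<in> {1..n-2}")
    case True
    then show ?thesis using zi[OF True] n by (auto simp: S)
  next
    case False
    then show ?thesis using zo[OF False] n zo zn by (auto simp: S)
  qed
  have vp: "v permutes {1..n}" unfolding v
    by (intro permutes_compose permutes_subset[OF zp]) (use n in \<open>auto simp: sgen_def intro!: permutes_swap_id\<close>)
  have SS: "sgen (n-1) (sgen (n-1) x) = x" for x by (simp add: sgen_def)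
  have "v (v x) = x" for x
  proof -
    have "v (v x) = z (sgen (n-1) (z (sgen (n-1) x)))" by (simp add: v)
    also have "\<dots> = z (z (sgen (n-1) (sgen (n-1) x)))" by (simp only: comm)
    finally show ?thesis by (simp only: zz SS)
  qed
  then have "v \<circ> v = id" by (simp add: fun_eq_iff)
  moreover
  moreover have "\<forall>x\<in>{1..n}. v x \<noteq> x"
  proof
    fix x assume x: "x \<in> {1..n}"
    show "v x \<noteq> x"
    proof (cases "x \<in> {1..n-2}")
      case True
      then have "sgen (n-1) x = x" using n by (auto simp: S)
      then show ?thesis using zf[OF True] v by simp
    next
      case False
      then have "x = n - 1 \<or> x = n" using x by auto
      then show ?thesis using n zn v by (auto simp: S)
    qed
  qed
  moreover have "v (n-1) = n" using n zn v by (auto simp: S)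
  ultimately show "FI n v \<and> v (n - 1) = n" using vp unfolding FI_def by blast
next
  assume a: "FI n v \<and> v (n - 1) = n"
  have vp: "v permutes {1..n}" and vv: "\<And>x. v (v x) = x" and vf: "\<And>x. x \<in> {1..n} \<Longrightarrow> v x \<noteq> x"
    and v1: "v (n-1) = n"
    using a unfolding FI_def by (auto simp: fun_eq_iff)
  have v2: "v n = n - 1" using vv[of "n-1"] v1 by simp
  have vo: "\<And>x. x \<notin> {1..n} \<Longrightarrow> v x = x" using permutes_not_in[OF vp] .
  have vi: "\<And>x. x \<in> {1..n} \<Longrightarrow> v x \<in> {1..n}" using permutes_in_image[OF vp] by blast
  have S: "sgen (n - Suc 0) x = (if x = n - Suc 0 then n else if x = n then n - Suc 0 else x)" for x
    using n by (simp add: sgen_def transpose_def)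
  define z where "z = v \<circ> sgen (n-1)"
  have mid: "x \<in> {1..n-2} \<Longrightarrow> v x \<in> {1..n-2}" for x
  proof -
    assume x: "x \<in> {1..n-2}"
    have "v x \<noteq> n - 1"
    proof
      assume "v x = n - 1"
      then have "x = n" using vv[of x] v1 by simp
      with x n show False by auto
    qed
    moreover have "v x \<noteq> n"
    proof
      assume "v x = n"
      then have "x = n - 1" using vv[of x] v2 by simp
      with x n show False by auto
    qed
    moreover have "v x \<in> {1..n}" using vi x by auto
    ultimately show ?thesis by auto
  qed
  have comm: "v (sgen (n-1) x) = sgen (n-1) (v x)" for x
  proof (cases "x \<in> {1..n-2}")
    case True
    then show ?thesis using mid[OF True] n by (auto simp: S)
  next
    case False
    then consider "x = n - Suc 0" | "x = n" | "x \<notin> {1..n}" by fastforce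
    then show ?thesis
    proof cases
      case 1 then show ?thesis using v1 v2 n by (simp add: S)
    next
      case 2 then show ?thesis using v1 v2 n by (simp add: S)
    next
      case 3 then have "x \<noteq> n - Suc 0" "x \<noteq> n" using n by auto
      then show ?thesis using vo[OF 3] 3 by (simp add: S)
    qed
  qed
  have SS: "sgen (n-1) (sgen (n-1) x) = x" for x by (simp add: sgen_def)
  have "z (z x) = x" for x
  proof -
    have "z (z x) = v (sgen (n-1) (v (sgen (n-1) x)))" by (simp add: z_def)
    also have "\<dots> = v (v (sgen (n-1) (sgen (n-1) x)))" by (simp only: comm)
    finally show ?thesis by (simp only: vv SS)
  qed
  then have zz: "z \<circ> z = id" by (simp add: fun_eq_iff)
  have zo: "z x = x" if "x \<notin> {1..n-2}" for x
  proof -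
    from that consider "x = n - Suc 0" | "x = n" | "x \<notin> {1..n}" by fastforce
    then show ?thesis
    proof cases
      case 1 then show ?thesis using v1 v2 n by (simp add: S z_def)
    next
      case 2 then show ?thesis using v1 v2 n by (simp add: S z_def)
    next
      case 3 then have "x \<noteq> n - Suc 0" "x \<noteq> n" using n by auto
      then show ?thesis using vo[OF 3] 3 by (simp add: S z_def)
    qed
  qed
  have "z permutes {1..n-2}"
    unfolding permutes_def
  proof (intro conjI allI impI)
    fix x assume "x \<notin> {1..n-2}" then show "z x = x" by (rule zo)
  next
    fix y show "\<exists>!x. z x = y"
      using zz by (metis comp_apply id_apply)
  qed
  moreover have "\<forall>x\<in>{1..n-2}. z x \<noteq> x"
  proof
    fix x assume x: "x \<in> {1..n-2}"
    then have "sgen (n-1) x = x" using n by (auto simp: S)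
    moreover have "x \<in> {1..n}" using x by auto
    ultimately show "z x \<noteq> x" using vf[of x] unfolding z_def by auto
  qed
  ultimately have "z \<in> fpf_invols (n-2)" using zz unfolding fpf_invols_def by blast
  moreover have "v = z \<circ> sgen (n-1)" unfolding z_def fun_eq_iff comp_apply SS by simp
  ultimately show "\<exists>z\<in>fpf_invols (n - 2). v = z \<circ> sgen (n - 1)" by blast
qed

lemma L_L: "longest n (longest n x) = x"
  by (auto simp: longest_def)

lemma L_perm: "longest n permutes {1..n}"
  unfolding permutes_def
proof (intro conjI allI impI)
  fix x assume "x \<notin> {1..n}" then show "longest n x = x" by (auto simp: longest_def)
next
  fix y show "\<exists>!x. longest n x = y" by (metis L_L)
qed

lemma L_inv: "inv (longest n) = longest n"
  by (rule inv_equality) (simp_all add: L_L)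

lemma Y1_char:
  assumes n: "n \<ge> 2"
  shows "w \<in> Y1 n \<longleftrightarrow> FI n w \<and> w 2 = 1"
proof
  assume "w \<in> Y1 n"
  then obtain z where z: "z \<in> fpf_invols (n - 2)" and w: "w = longest n \<circ> z \<circ> sgen (n - 1) \<circ> longest n"
    unfolding Y1_def by blast
  define v where "v = z \<circ> sgen (n - 1)"
  have "FI n v \<and> v (n - 1) = n" using base[OF n, of v] z v_def by blast
  moreover have w': "w = longest n \<circ> v \<circ> inv (longest n)" unfolding w v_def L_inv by (simp add: o_assoc)
  ultimately have "FI n w" using FI_conj[OF L_perm] by simp
  moreover have "w 2 = 1"
  proof -
    have "longest n 2 = n - 1" using n by (simp add: longest_def)
    moreover have "longest n n = 1" using n by (simp add: longest_def)
    ultimately show ?thesis using w' L_inv \<open>FI n v \<and> v (n - 1) = n\<close> by simp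
  qed
  ultimately show "FI n w \<and> w 2 = 1" by blast
next
  assume a: "FI n w \<and> w 2 = 1"
  define v where "v = longest n \<circ> w \<circ> inv (longest n)"
  have "FI n v" using FI_conj[OF L_perm] a v_def by blast
  moreover have "v (n - 1) = n"
  proof -
    have "longest n (n - 1) = 2" using n by (simp add: longest_def)
    moreover have "longest n 1 = n" using n by (simp add: longest_def)
    ultimately show ?thesis using a L_inv v_def by simp
  qed
  ultimately obtain z where z: "z \<in> fpf_invols (n - 2)" and v: "v = z \<circ> sgen (n - 1)"
    using base[OF n, of v] by blast
  have "w = longest n \<circ> z \<circ> sgen (n - 1) \<circ> longest n"
  proof -
    have "longest n \<circ> z \<circ> sgen (n - 1) \<circ> longest n = longest n \<circ> v \<circ> longest n"
      by (simp add: v o_assoc)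
    also have "\<dots> = w" by (simp add: v_def L_inv fun_eq_iff L_L)
    finally show ?thesis by simp
  qed
  with z show "w \<in> Y1 n" unfolding Y1_def by blast
qed

lemma sigma_perm: "i + 1 \<le> n \<Longrightarrow> sigma i permutes {1..n}"
proof (induction i)
  case 0 show ?case unfolding sigma.simps(1) by (rule permutes_id)
next
  case (Suc i)
  then have "sigma i permutes {1..n}" by simp
  moreover have "sgen (Suc i) permutes {1..n}" unfolding sgen_def
    using Suc.prems by (intro permutes_swap_id) auto
  ultimately show ?case unfolding sigma.simps(2) by (rule permutes_compose)
qed

lemma sigma_1: "sigma i 1 = i + 1"
  by (induction i) (auto simp: sgen_def transpose_def)

lemma sigma_2: "i \<ge> 1 \<Longrightarrow> sigma i 2 = 1"
proof (induction i)
  case 0 then show ?case by simp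
next
  case (Suc i)
  then show ?case
    by (cases "i = 0") (auto simp: sgen_def transpose_def)
qed

lemma Yset_char:
  assumes n: "n \<ge> 2" and i: "1 \<le> i" "i + 1 \<le> n"
  shows "w \<in> Yset n i \<longleftrightarrow> FI n w \<and> w 1 = i + 1"
proof -
  have p: "sigma i permutes {1..n}" using sigma_perm i by simp
  have i1: "inv (sigma i) 1 = 2" using permutes_inv_eq[OF p] sigma_2 i by simp
  have i2: "inv (sigma i) (i + 1) = 1" using permutes_inv_eq[OF p] sigma_1 by simp
  show ?thesis
  proof
    assume "w \<in> Yset n i"
    then obtain y where y: "y \<in> Y1 n" and w: "w = sigma i \<circ> y \<circ> inv (sigma i)"
      unfolding Yset_def by blast
    have "FI n y" "y 2 = 1" using y Y1_char[OF n] by auto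
    then show "FI n w \<and> w 1 = i + 1"
      using FI_conj[OF p] w i1 sigma_1 by simp
  next
    assume a: "FI n w \<and> w 1 = i + 1"
    define y where "y = inv (sigma i) \<circ> w \<circ> inv (inv (sigma i))"
    have ii: "inv (inv (sigma i)) = sigma i" using p by (simp add: inv_inv_eq permutes_bij)
    have "FI n y" using FI_conj[OF permutes_inv[OF p]] a y_def by blast
    moreover have "y 2 = 1" using y_def ii sigma_2 i a i2 by simp
    ultimately have "y \<in> Y1 n" using Y1_char[OF n] by blast
    moreover have "w = sigma i \<circ> y \<circ> inv (sigma i)"
      unfolding y_def ii by (simp add: fun_eq_iff permutes_inverses[OF p])
    ultimately show "w \<in> Yset n i" unfolding Yset_def by blast
  qed
qed

theorem proposition3p8:
  fixes n i j :: nat and y :: "nat \<Rightarrow> nat"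
  assumes "even n" and "n \<ge> 4"
    and "1 \<le> i" and "i \<le> n - 1"
    and "y \<in> Yset n i"
    and "1 \<le> j" and "j \<le> n - 1"
    and "sgen j \<circ> y \<circ> sgen j \<notin> Yset n i"
  shows "(i = 1 \<longrightarrow> j = 2)
       \<and> (2 \<le> i \<and> i \<le> n - 2 \<longrightarrow> j \<in> {1, i, i + 1})
       \<and> (i = n - 1 \<longrightarrow> j \<in> {1, n - 1})"
proof -
  have n: "n \<ge> 2" and i: "1 \<le> i" "i + 1 \<le> n" using assms by auto
  have yc: "FI n y" "y 1 = i + 1" using assms(5) Yset_char[OF n i] by auto
  have yy: "y (y x) = x" for x using yc(1) unfolding FI_def by (simp add: fun_eq_iff)
  have sp: "sgen j permutes {1..n}" using assms by (auto simp: sgen_def intro!: permutes_swap_id)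
  have si: "inv (sgen j) = sgen j" by (simp add: sgen_def)
  have "FI n (sgen j \<circ> y \<circ> sgen j)" using FI_conj[OF sp yc(1)] si by simp
  then have ne: "sgen j (y (sgen j 1)) \<noteq> i + 1"
    using assms(8) Yset_char[OF n i] by auto
  have key: "(j = 1 \<or> j = i \<or> j = i + 1) \<and> \<not> (i = 1 \<and> j = 1)"
  proof (intro conjI notI)
    show "j = 1 \<or> j = i \<or> j = i + 1"
    proof (rule ccontr)
      assume "\<not> (j = 1 \<or> j = i \<or> j = i + 1)"
      then have "sgen j 1 = 1" "sgen j (i + 1) = i + 1" using assms by (auto simp: sgen_def transpose_def)
      then show False using ne yc by simp
    qed
  next
    assume "i = 1 \<and> j = 1"
    then have a: "sgen j 1 = 2" "sgen j 2 = 1" by (auto simp: sgen_def transpose_def)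
    have "y 2 = 1" using yy[of 1] yc \<open>i = 1 \<and> j = 1\<close> by (simp add: numeral_2_eq_2)
    note a this
    then show False using ne \<open>i = 1 \<and> j = 1\<close> by simp
  qed
  then show ?thesis using assms by auto
qed

end
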